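(* Consider the delayed online learning protocol of the context. Assume that $\|g_t\|_*\le G$ for all $t$ and that the sequence of active feedback sets is non-decreasing, $\mathcal S_t\subset\mathcal S_{t+1}$. Let DDA be run with \[\eta_t=\min\Big(\eta_{t-1},\ \frac{r}{\sqrt{\widetilde L_t+G^2\nu_t}}\Big),\qquad \eta_0=+\infty,\] where $\nu_t=t+2\Lambda_t-|\mathcal S_t|-2|\mathcal B_t|$. Then for every $p\in\mathcal X$ with $h(p)\le r^2$, \[R_T(p)\le 2r\max_{1\le t\le T}\sqrt{\widetilde L_t+G^2\nu_t}\le 2r\min\Big(\max_{1\le t\le T}\sqrt{L_t+G^2\nu_t},\ G\sqrt{T+2\Lambda_T}\Big).\]
   Context: Let $\mathcal V$ be a finite-dimensional real vector space with norm $\|\cdot\|$ and dual norm $\|\cdot\|_*$, and $\mathcal X\subset\mathcal V$ closed convex. A regularizer $h:\mathcal V\to\mathbb R\cup\{+\infty\}$ is lower semicontinuous, $1$-strongly convex w.r.t. $\|\cdot\|$ on $\mathcal X$, with $\mathcal X\subset\operatorname{dom}h$, whose subdifferential admits a continuous selection, and $h\ge0$. Protocol: at each round $t=1,\dots,T$ one agent $i(t)$ is active, plays $x_t\in\mathcal X$, incurs $f_t(x_t)$ ($f_t$ convex, $\mathcal X\subset\operatorname{dom}\partial f_t$); a subgradient $g_t\in\partial f_t(x_t)$ is revealed later. $\mathcal S^i_t\subset\{1,\dots,t-1\}$: timestamps of subgradients available to agent $i$ at time $t$, nondecreasing in $t$; $\mathcal S_t=\mathcal S^{i(t)}_t$,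 $\mathcal U_t=\{1,\dots,t-1\}\setminus\mathcal S_t$. DDA: $x_t=\arg\min_{x\in\mathcal X}\{\sum_{s\in\mathcal S_t}\langle g_s,x\rangle+h(x)/\eta_t\}$. Regret: $R_T(p)=\sum_tf_t(x_t)-\sum_tf_t(p)$. Lag: $L_t=\sum_{s=1}^t\big(\|g_s\|_*^2+2\|g_s\|_*\sum_{q\in\mathcal U_s}\|g_q\|_*\big)$. Cumulative unavailability: $\Lambda_t=\sum_{s=1}^t|\mathcal U_s|$. Arrival order: fix a permutation $\sigma$ of $\{1,\dots,T\}$ with $\mathcal S_t=\{\sigma(1),\dots,\sigma(|\mathcal S_t|)\}$ for all $t$; $\mathcal R_t=\{\sigma(1),\dots,\sigma(\sigma^{-1}(t)-1)\}$. Then $\widetilde L_t=\sum_{s\in\mathcal S_t}\big(\|g_s\|_*^2+2\|g_s\|_*\sum_{q\in\mathcal R_s\setminus\mathcal S_s}\|g_q\|_*\big)$, and $\mathcal B_t$ is the set of unordered pairs $\{s,q\}$ of distinct elements with $s\in\mathcal S_t$ and $q\in\mathcal R_s\setminus\mathcal S_s$. *)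

theory Defs
  imports "HOL-Analysis.Analysis"
begin

text \<open>The finite-dimensional real vector space V is modelled by a type of class
  euclidean_space; its dual is identified with V through the inner product.
  The (arbitrary) norm on V is an explicit function nrm.\<close>

definition is_norm :: "('a::real_vector \<Rightarrow> real) \<Rightarrow> bool" where
  "is_norm nrm \<longleftrightarrow>
     (\<forall>x. 0 \<le> nrm x) \<and> (\<forall>x. nrm x = 0 \<longleftrightarrow> x = 0) \<and>
     (\<forall>c x. nrm (c *\<^sub>R x) = \<bar>c\<bar> * nrm x) \<and>
     (\<forall>x y. nrm (x + y) \<le> nrm x + nrm y)"

definition dual_norm :: "('a::euclidean_space \<Rightarrow> real) \<Rightarrow> 'a \<Rightarrow> real" where
  "dual_norm nrm g = Sup {g \<bullet> x | x. nrm x \<le> 1}"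

definition subdiff :: "('a::euclidean_space \<Rightarrow> ereal) \<Rightarrow> 'a \<Rightarrow> 'a set" where
  "subdiff f x = {g. f x \<noteq> \<infinity> \<and> (\<forall>y. f x + ereal (g \<bullet> (y - x)) \<le> f y)}"

definition proper_convex :: "('a::real_vector \<Rightarrow> ereal) \<Rightarrow> bool" where
  "proper_convex f \<longleftrightarrow> (\<forall>x. f x \<noteq> -\<infinity>) \<and>
     (\<forall>x y u. 0 \<le> u \<and> u \<le> 1 \<longrightarrow>
        f (u *\<^sub>R x + (1 - u) *\<^sub>R y) \<le> ereal u * f x + ereal (1 - u) * f y)"

definition lower_semicont :: "('a::topological_space \<Rightarrow> ereal) \<Rightarrow> bool" where
  "lower_semicont h \<longleftrightarrow> (\<forall>x. h x \<le> Liminf (at x) h)"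

definition strongly_convex_on :: "('a::real_vector \<Rightarrow> real) \<Rightarrow> 'a set \<Rightarrow> ('a \<Rightarrow> ereal) \<Rightarrow> bool" where
  "strongly_convex_on nrm X h \<longleftrightarrow>
     (\<forall>x\<in>X. \<forall>y\<in>X. \<forall>u. 0 \<le> u \<and> u \<le> 1 \<longrightarrow>
        h (u *\<^sub>R x + (1 - u) *\<^sub>R y) \<le>
          ereal u * h x + ereal (1 - u) * h y - ereal (u * (1 - u) / 2 * (nrm (x - y))\<^sup>2))"

definition has_continuous_subgrad_selection :: "('a::euclidean_space \<Rightarrow> ereal) \<Rightarrow> bool" where
  "has_continuous_subgrad_selection h \<longleftrightarrow>
     (\<exists>\<phi>. continuous_on {x. subdiff h x \<noteq> {}} \<phi> \<and>
          (\<forall>x. subdiff h x \<noteq> {} \<longrightarrow> \<phi> x \<in> subdiff h x))"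

text \<open>Protocol quantities. S t = available timestamps at time t, g s = subgradients,
  sigma = arrival order (permutation of {1..T}).\<close>

definition unavail :: "(nat \<Rightarrow> nat set) \<Rightarrow> nat \<Rightarrow> nat set" where
  "unavail S t = {1..<t} - S t"

definition lag :: "('a::euclidean_space \<Rightarrow> real) \<Rightarrow> (nat \<Rightarrow> 'a) \<Rightarrow> (nat \<Rightarrow> nat set) \<Rightarrow> nat \<Rightarrow> real" where
  "lag nrm g S t = (\<Sum>s=1..t. (dual_norm nrm (g s))\<^sup>2
       + 2 * dual_norm nrm (g s) * (\<Sum>q\<in>unavail S s. dual_norm nrm (g q)))"

definition cum_unavail :: "(nat \<Rightarrow> nat set) \<Rightarrow> nat \<Rightarrow> nat" where
  "cum_unavail S t = (\<Sum>s=1..t. card (unavail S s))"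

definition arrived_before :: "nat \<Rightarrow> (nat \<Rightarrow> nat) \<Rightarrow> nat \<Rightarrow> nat set" where
  "arrived_before T \<sigma> t = \<sigma> ` {1..<inv_into {1..T} \<sigma> t}"

definition lag_tilde :: "nat \<Rightarrow> (nat \<Rightarrow> nat) \<Rightarrow> ('a::euclidean_space \<Rightarrow> real) \<Rightarrow> (nat \<Rightarrow> 'a)
    \<Rightarrow> (nat \<Rightarrow> nat set) \<Rightarrow> nat \<Rightarrow> real" where
  "lag_tilde T \<sigma> nrm g S t = (\<Sum>s\<in>S t. (dual_norm nrm (g s))\<^sup>2
       + 2 * dual_norm nrm (g s) * (\<Sum>q\<in>arrived_before T \<sigma> s - S s. dual_norm nrm (g q)))"

definition pairs_B :: "nat \<Rightarrow> (nat \<Rightarrow> nat) \<Rightarrow> (nat \<Rightarrow> nat set) \<Rightarrow> nat \<Rightarrow> nat set set" where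
  "pairs_B T \<sigma> S t = {{s, q} | s q. s \<in> S t \<and> q \<in> arrived_before T \<sigma> s - S s \<and> s \<noteq> q}"

definition nu :: "nat \<Rightarrow> (nat \<Rightarrow> nat) \<Rightarrow> (nat \<Rightarrow> nat set) \<Rightarrow> nat \<Rightarrow> real" where
  "nu T \<sigma> S t = real t + 2 * real (cum_unavail S t) - real (card (S t))
                 - 2 * real (card (pairs_B T \<sigma> S t))"

end

theory Submission
  imports Defs
begin


lemma nrm_0: "is_norm nrm \<Longrightarrow> nrm 0 = 0"
  by (simp add: is_norm_def)

lemma nrm_scale: "is_norm nrm \<Longrightarrow> nrm (c *\<^sub>R x) = \<bar>c\<bar> * nrm x"
  by (simp add: is_norm_def)

lemma nrm_minus: "is_norm nrm \<Longrightarrow> nrm (- x) = nrm x"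
  using nrm_scale[of nrm "-1" x] by simp

lemma nrm_commute: "is_norm nrm \<Longrightarrow> nrm (x - y) = nrm (y - x)"
  using nrm_minus[of nrm "x - y"] by simp

lemma nrm_tri: "is_norm nrm \<Longrightarrow> nrm (x + y) \<le> nrm x + nrm y"
  by (simp add: is_norm_def)

lemma nrm_nonneg: "is_norm nrm \<Longrightarrow> 0 \<le> nrm x"
  by (simp add: is_norm_def)

lemma nrm_sum: "is_norm nrm \<Longrightarrow> nrm (sum f A) \<le> (\<Sum>a\<in>A. nrm (f a))"
proof (induction A rule: infinite_finite_induct)
  case (infinite A) then show ?case by (simp add: nrm_0)
next
  case empty then show ?case by (simp add: nrm_0)
next
  case (insert x F)
  then show ?case using nrm_tri[OF insert.prems, of "f x" "sum f F"] by simp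
qed

lemma nrm_upper:
  fixes nrm :: "'a::euclidean_space \<Rightarrow> real"
  assumes N: "is_norm nrm"
  shows "nrm x \<le> (\<Sum>b\<in>Basis. nrm b) * norm x"
proof -
  have "nrm x = nrm (\<Sum>b\<in>Basis. inner x b *\<^sub>R b)" by (simp add: euclidean_representation)
  also have "\<dots> \<le> (\<Sum>b\<in>Basis. nrm (inner x b *\<^sub>R b))" by (rule nrm_sum[OF N])
  also have "\<dots> = (\<Sum>b\<in>Basis. \<bar>inner x b\<bar> * nrm b)" by (simp add: nrm_scale[OF N])
  also have "\<dots> \<le> (\<Sum>b\<in>Basis. norm x * nrm b)"
    by (intro sum_mono mult_right_mono) (auto simp: Basis_le_norm nrm_nonneg[OF N])
  finally show ?thesis by (simp add: sum_distrib_left mult.commute)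
qed

lemma nrm_lower:
  fixes nrm :: "'a::euclidean_space \<Rightarrow> real"
  assumes N: "is_norm nrm"
  shows "\<exists>m>0. \<forall>x. m * norm x \<le> nrm x"
proof -
  define M where "M = (\<Sum>b\<in>Basis. nrm (b::'a))"
  have M0: "0 \<le> M" unfolding M_def by (simp add: sum_nonneg nrm_nonneg[OF N])
  have "lipschitz_on M UNIV nrm"
  proof (rule lipschitz_onI)
    fix x y :: 'a
    have "nrm x \<le> nrm y + nrm (x - y)" using nrm_tri[OF N, of y "x - y"] by simp
    moreover have "nrm y \<le> nrm x + nrm (x - y)" using nrm_tri[OF N, of x "y - x"] nrm_commute[OF N, of x y] by simp
    ultimately have "dist (nrm x) (nrm y) \<le> nrm (x - y)" by (simp add: dist_real_def abs_le_iff)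
    also have "\<dots> \<le> M * dist x y" using nrm_upper[OF N, of "x - y"] by (simp add: M_def dist_norm)
    finally show "dist (nrm x) (nrm y) \<le> M * dist x y" .
  qed (rule M0)
  then have cont: "continuous_on (sphere 0 1) nrm"
    using lipschitz_on_continuous_on continuous_on_subset by blast
  obtain b :: 'a where b: "b \<in> Basis" using nonempty_Basis by blast
  have ne: "sphere (0::'a) 1 \<noteq> {}" using b norm_Basis[OF b] unfolding sphere_def by (intro ex_in_conv[THEN iffD1] exI[of _ b]) simp
  obtain x0 where x0: "x0 \<in> sphere 0 1" "\<forall>y\<in>sphere 0 1. nrm x0 \<le> nrm y"
    using continuous_attains_inf[OF compact_sphere ne cont] by blast
  have "x0 \<noteq> 0" using x0(1) by auto
  then have pos: "0 < nrm x0" using N unfolding is_norm_def by (metis order_le_less)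
  show ?thesis
  proof (intro exI[of _ "nrm x0"] conjI allI pos)
    fix x :: 'a
    show "nrm x0 * norm x \<le> nrm x"
    proof (cases "x = 0")
      case True then show ?thesis by (simp add: nrm_0[OF N])
    next
      case False
      then have "(1 / norm x) *\<^sub>R x \<in> sphere 0 1" by auto
      then have "nrm x0 \<le> nrm ((1 / norm x) *\<^sub>R x)" using x0(2) by blast
      also have "\<dots> = nrm x / norm x" by (simp add: nrm_scale[OF N])
      finally show ?thesis using False by (simp add: field_simps)
    qed
  qed
qed

lemma dual_norm_props:
  fixes nrm :: "'a::euclidean_space \<Rightarrow> real"
  assumes N: "is_norm nrm"
  shows "0 \<le> dual_norm nrm g" and "inner g x \<le> dual_norm nrm g * nrm x"
proof -
  obtain m where m: "m > 0" "\<forall>x. m * norm x \<le> nrm x" using nrm_lower[OF N] by blast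
  define A where "A = {inner g x | x. nrm x \<le> 1}"
  have bdd: "bdd_above A"
  proof (rule bdd_aboveI)
    fix y assume "y \<in> A"
    then obtain x where x: "y = inner g x" "nrm x \<le> 1" unfolding A_def by blast
    have "norm x \<le> 1 / m" using m x(2) by (smt (verit) divide_right_mono nonzero_mult_div_cancel_left)
    then have "norm g * norm x \<le> norm g * (1 / m)" by (rule mult_left_mono) simp
    then show "y \<le> norm g * (1/m)" using x(1) Cauchy_Schwarz_ineq2[of g x] by (smt (verit) norm_cauchy_schwarz)
  qed
  have in0: "0 \<in> A" unfolding A_def using nrm_0[OF N] by (intro CollectI exI[of _ 0]) simp
  have dn: "dual_norm nrm g = Sup A" unfolding dual_norm_def A_def by simp
  show "0 \<le> dual_norm nrm g" unfolding dn using cSup_upper[OF in0 bdd] .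
  show "inner g x \<le> dual_norm nrm g * nrm x"
  proof (cases "nrm x = 0")
    case True then have "x = 0" using N unfolding is_norm_def by blast
    then show ?thesis by (simp add: nrm_0[OF N])
  next
    case False
    then have pos: "nrm x > 0" using nrm_nonneg[OF N, of x] by simp
    have "nrm ((1 / nrm x) *\<^sub>R x) = 1" using pos by (simp add: nrm_scale[OF N])
    then have "inner g ((1 / nrm x) *\<^sub>R x) \<in> A" unfolding A_def by (intro CollectI exI[of _ "(1 / nrm x) *\<^sub>R x"]) simp
    then have "inner g ((1 / nrm x) *\<^sub>R x) \<le> dual_norm nrm g" unfolding dn using cSup_upper[OF _ bdd] by blast
    then have "inner g x / nrm x \<le> dual_norm nrm g" by simp
    then show ?thesis using pos by (simp add: field_simps)
  qed
qed



definition sc_on :: "('a::real_vector \<Rightarrow> real) \<Rightarrow> 'a set \<Rightarrow> ('a \<Rightarrow> real) \<Rightarrow> bool" where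
  "sc_on nrm X H \<longleftrightarrow> (\<forall>x\<in>X. \<forall>y\<in>X. \<forall>u. 0 \<le> u \<and> u \<le> 1 \<longrightarrow>
     H (u *\<^sub>R x + (1 - u) *\<^sub>R y) \<le> u * H x + (1 - u) * H y - u * (1 - u) / 2 * (nrm (x - y))\<^sup>2)"

lemma growth:
  fixes c z x :: "'a::euclidean_space"
  assumes cx: "convex X" and z: "z \<in> X" and x: "x \<in> X" and e: "e > 0"
    and Hsc: "sc_on nrm X H"
    and zmin: "\<forall>y\<in>X. inner c z + H z / e \<le> inner c y + H y / e"
  shows "inner c z + H z / e + (nrm (x - z))\<^sup>2 / (2 * e) \<le> inner c x + H x / e"
proof -
  define A where "A = inner c z + H z / e"
  define B where "B = inner c x + H x / e"
  define K where "K = (nrm (x - z))\<^sup>2 / (2 * e)"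
  have K0: "K \<ge> 0" unfolding K_def using e by simp
  have key: "A \<le> B - (1 - u) * K" if u: "0 < u" "u \<le> 1" for u
  proof -
    define w where "w = u *\<^sub>R x + (1 - u) *\<^sub>R z"
    have wX: "w \<in> X" unfolding w_def using cx z x u by (simp add: convex_def)
    have "A \<le> inner c w + H w / e" using zmin wX unfolding A_def by blast
    also have "H w \<le> u * H x + (1 - u) * H z - u * (1 - u) / 2 * (nrm (x - z))\<^sup>2"
      using Hsc x z u unfolding sc_on_def w_def by simp
    then have "H w / e \<le> (u * H x + (1 - u) * H z - u * (1 - u) / 2 * (nrm (x - z))\<^sup>2) / e"
      using e by (simp add: divide_right_mono)
    then have "inner c w + H w / e \<le> u * inner c x + (1 - u) * inner c z +
        (u * H x + (1 - u) * H z - u * (1 - u) / 2 * (nrm (x - z))\<^sup>2) / e"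
      unfolding w_def by (simp add: inner_add_right)
    finally have 1: "A \<le> u * inner c x + (1 - u) * inner c z +
        (u * H x + (1 - u) * H z - u * (1 - u) / 2 * (nrm (x - z))\<^sup>2) / e" .
    have 2: "(u * H x + (1 - u) * H z - u * (1 - u) / 2 * (nrm (x - z))\<^sup>2) / e
       = u * (H x / e) + (1 - u) * (H z / e) - u * (1 - u) * K"
      unfolding K_def using e by (simp add: field_simps)
    have "A \<le> u * B + (1 - u) * A - u * (1 - u) * K"
      using 1 unfolding 2 A_def B_def by (simp add: algebra_simps)
    then have "u * A \<le> u * (B - (1 - u) * K)" by (simp add: algebra_simps)
    then show ?thesis using u by simp
  qed
  have "A + K \<le> B + \<epsilon>" if eps: "\<epsilon> > 0" for \<epsilon>
  proof -
    define u where "u = min 1 (\<epsilon> / (K + 1))"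
    have u: "0 < u" "u \<le> 1" unfolding u_def using eps K0 by auto
    have "u * K \<le> \<epsilon> / (K + 1) * K" unfolding u_def by (rule mult_right_mono[OF min.cobounded2 K0])
    also have "\<dots> \<le> \<epsilon>" using K0 eps by (simp add: field_simps)
    finally have "u * K \<le> \<epsilon>" .
    with key[OF u] show ?thesis by (simp add: algebra_simps)
  qed
  then have "A + K \<le> B" by (rule field_le_epsilon)
  then show ?thesis unfolding A_def B_def K_def .
qed

lemma segment_step:
  fixes c \<delta> g z x :: "'a::euclidean_space"
  assumes N: "is_norm nrm" and cx: "convex X" and z: "z \<in> X" and x: "x \<in> X" and e: "e > 0"
    and Hsc: "sc_on nrm X H"
    and zmin: "\<forall>y\<in>X. inner c z + H z / e \<le> inner c y + H y / e"
    and D: "D \<ge> 0" and a: "a \<ge> 0"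
    and \<delta>b: "\<forall>v. inner \<delta> v \<le> D * nrm v"
    and gb: "\<forall>v. inner g v \<le> a * nrm v"
  shows "\<exists>w\<in>X. inner (c + \<delta>) w + H w / e
            \<le> inner (c + \<delta>) x + H x / e + inner g (x - z) + e * (a\<^sup>2 / 2 + a * D)"
proof -
  define d where "d = nrm (x - z)"
  have d0: "d \<ge> 0" unfolding d_def using nrm_nonneg[OF N] .
  have gxz: "inner g (x - z) \<ge> - (a * d)"
    using gb[rule_format, of "z - x"] nrm_commute[OF N, of x z] unfolding d_def
    by (simp add: inner_diff_right)
  show ?thesis
  proof (cases "d \<le> e * D")
    case True
    have "a * d \<le> a * (e * D)" using True a by (simp add: mult_left_mono)
    moreover have "0 \<le> e * (a\<^sup>2 / 2)" using e by simp
    ultimately show ?thesis using x gxz by (intro bexI[of _ x]) (auto simp: algebra_simps)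
  next
    case False
    then have dpos: "d > 0" using e D by (smt (verit) mult_nonneg_nonneg)
    define u where "u = e * D / d"
    have u: "0 \<le> u" "u \<le> 1" unfolding u_def using False dpos e D by auto
    define w where "w = u *\<^sub>R x + (1 - u) *\<^sub>R z"
    have wX: "w \<in> X" unfolding w_def using cx z x u by (simp add: convex_def)
    define F where "F = (\<lambda>y. inner (c + \<delta>) y + H y / e)"
    have Hw: "H w \<le> u * H x + (1 - u) * H z - u * (1 - u) / 2 * d\<^sup>2"
      using Hsc x z u unfolding sc_on_def w_def d_def by simp
    have Fw: "F w \<le> u * F x + (1 - u) * F z - u * (1 - u) * d\<^sup>2 / (2 * e)"
    proof -
      have "H w / e \<le> (u * H x + (1 - u) * H z - u * (1 - u) / 2 * d\<^sup>2) / e"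
        using Hw e by (simp add: divide_right_mono)
      also have "\<dots> = u * (H x / e) + (1 - u) * (H z / e) - u * (1 - u) * d\<^sup>2 / (2 * e)"
        using e by (simp add: field_simps)
      finally have 1: "H w / e \<le> u * (H x / e) + (1 - u) * (H z / e) - u * (1 - u) * d\<^sup>2 / (2 * e)" .
      have 2: "inner (c + \<delta>) w = u * inner (c + \<delta>) x + (1 - u) * inner (c + \<delta>) z"
        unfolding w_def by (simp add: inner_add_right)
      show ?thesis unfolding F_def using 1 2 by (simp add: algebra_simps)
    qed
    have gr: "inner c z + H z / e + d\<^sup>2 / (2 * e) \<le> inner c x + H x / e"
      using growth[OF cx z x e Hsc zmin] unfolding d_def .
    have dz: "inner \<delta> (z - x) \<le> D * d"
      using \<delta>b[rule_format, of "z - x"] nrm_commute[OF N, of x z] unfolding d_def by simp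
    have Fz: "F z \<le> F x + D * d - d\<^sup>2 / (2 * e)"
      using gr dz unfolding F_def by (simp add: inner_add_left inner_diff_right algebra_simps)
    have "F w \<le> u * F x + (1 - u) * (F x + D * d - d\<^sup>2 / (2 * e)) - u * (1 - u) * d\<^sup>2 / (2 * e)"
      using Fw Fz u by (smt (verit) mult_left_mono)
    also have "\<dots> = F x - (d - e * D)\<^sup>2 / (2 * e)"
      unfolding u_def using dpos e by (simp add: field_simps power2_eq_square)
    also have "\<dots> \<le> F x + inner g (x - z) + e * (a\<^sup>2 / 2 + a * D)"
    proof -
      have "(d - e * D - e * a)\<^sup>2 \<ge> 0" by simp
      then have "a * d \<le> (d - e * D)\<^sup>2 / (2 * e) + e * (a\<^sup>2 / 2 + a * D)"
        using e by (simp add: field_simps power2_eq_square)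
      then show ?thesis using gxz by simp
    qed
    finally show ?thesis using wX unfolding F_def by blast
  qed
qed



lemma sqrt_tele:
  fixes l :: "nat \<Rightarrow> real"
  assumes l0: "\<And>j. 0 \<le> l j"
  shows "(\<Sum>j=1..n. l j / sqrt (\<Sum>i=1..j. l i)) \<le> 2 * sqrt (\<Sum>i=1..n. l i)"
proof (induction n)
  case 0 then show ?case by simp
next
  case (Suc n)
  define L where "L = (\<Sum>i=1..n. l i)"
  define L' where "L' = (\<Sum>i=1..Suc n. l i)"
  have L0: "0 \<le> L" unfolding L_def by (simp add: sum_nonneg l0)
  have LL': "L' = L + l (Suc n)" unfolding L_def L'_def by simp
  have step: "l (Suc n) / sqrt L' \<le> 2 * sqrt L' - 2 * sqrt L"
  proof (cases "L' = 0")
    case True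
    then have "l (Suc n) = 0" using LL' L0 l0[of "Suc n"] by simp
    then show ?thesis using True LL' by simp
  next
    case False
    then have pos: "sqrt L' > 0" using LL' L0 l0[of "Suc n"] by simp
    have le: "sqrt L \<le> sqrt L'" using LL' l0[of "Suc n"] by simp
    have "l (Suc n) = (sqrt L' - sqrt L) * (sqrt L' + sqrt L)"
      using LL' L0 l0[of "Suc n"] by (simp add: algebra_simps)
    also have "\<dots> \<le> (sqrt L' - sqrt L) * (2 * sqrt L')"
      using le by (intro mult_left_mono) auto
    finally show ?thesis using pos by (simp add: field_simps)
  qed
  have "(\<Sum>j=1..Suc n. l j / sqrt (\<Sum>i=1..j. l i)) = (\<Sum>j=1..n. l j / sqrt (\<Sum>i=1..j. l i)) + l (Suc n) / sqrt L'"
    unfolding L'_def by simp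
  also have "\<dots> \<le> 2 * sqrt L + l (Suc n) / sqrt L'" using Suc.IH unfolding L_def by simp
  also have "\<dots> \<le> 2 * sqrt L'" using step by simp
  finally show ?case unfolding L'_def .
qed



lemma comb:
  fixes nrm :: "'a::euclidean_space \<Rightarrow> real" and g :: "nat \<Rightarrow> 'a"
  assumes N: "is_norm nrm"
    and \<sigma>: "bij_betw \<sigma> {1..T} {1..T}"
    and Ssub: "\<forall>t\<in>{1..T}. S t \<subseteq> {1..<t}"
    and Sord: "\<forall>t\<in>{1..T}. S t = \<sigma> ` {1..card (S t)}"
    and gb: "\<forall>t\<in>{1..T}. dual_norm nrm (g t) \<le> G"
    and t: "t \<in> {1..T}"
  shows "lag_tilde T \<sigma> nrm g S t \<le> lag nrm g S t"
    and "lag nrm g S t \<le> lag_tilde T \<sigma> nrm g S t + G\<^sup>2 * nu T \<sigma> S t"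
    and "G\<^sup>2 \<le> lag_tilde T \<sigma> nrm g S t + G\<^sup>2 * nu T \<sigma> S t"
    and "lag_tilde T \<sigma> nrm g S t + G\<^sup>2 * nu T \<sigma> S t \<le> G\<^sup>2 * (real t + 2 * real (cum_unavail S t))"
proof -
  define a where "a = (\<lambda>s. dual_norm nrm (g s))"
  define m where "m = inv_into {1..T} \<sigma>"
  define AB where "AB = arrived_before T \<sigma>"
  have a0: "\<And>s. 0 \<le> a s" unfolding a_def using dual_norm_props(1)[OF N] .
  have aG: "\<And>s. s \<in> {1..T} \<Longrightarrow> a s \<le> G" unfolding a_def using gb by blast
  have G0: "0 \<le> G" using aG[of 1] a0[of 1] t by force
  have a2G: "a s * a q \<le> G\<^sup>2" if "s \<in> {1..T}" "q \<in> {1..T}" for s q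
    using mult_mono[OF aG[OF that(1)] aG[OF that(2)] G0 a0] by (simp add: power2_eq_square)
  have inj: "inj_on \<sigma> {1..T}" and img: "\<sigma> ` {1..T} = {1..T}" using \<sigma> by (auto simp: bij_betw_def)
  have m\<sigma>: "m (\<sigma> k) = k" if "k \<in> {1..T}" for k unfolding m_def using inv_into_f_f[OF inj that] .
  have \<sigma>m: "\<sigma> (m s) = s" "m s \<in> {1..T}" if "s \<in> {1..T}" for s
    unfolding m_def using f_inv_into_f[of s \<sigma> "{1..T}"] inv_into_into[of s \<sigma> "{1..T}"] that img by auto
  have ABiff: "q \<in> AB s \<longleftrightarrow> q \<in> {1..T} \<and> m q < m s" if s: "s \<in> {1..T}" for s q
  proof
    assume "q \<in> AB s"
    then obtain k where k: "q = \<sigma> k" "1 \<le> k" "k < m s"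
      unfolding AB_def arrived_before_def m_def by auto
    have kT: "k \<in> {1..T}" using k \<sigma>m(2)[OF s] by auto
    then show "q \<in> {1..T} \<and> m q < m s" using k img m\<sigma> by auto
  next
    assume q: "q \<in> {1..T} \<and> m q < m s"
    then have "m q \<in> {1..<m s}" using \<sigma>m(2)[of q] by auto
    then show "q \<in> AB s" unfolding AB_def arrived_before_def m_def[symmetric] using \<sigma>m(1)[of q] q
      by (metis image_eqI)
  qed
  have ST: "S t' \<subseteq> {1..T}" if "t' \<in> {1..T}" for t' using Ssub that by fastforce
  have cardS: "card (S t') \<le> t' - 1" if "t' \<in> {1..T}" for t'
    using card_mono[OF _ Ssub[rule_format, OF that]] by simp
  have Siff: "s \<in> S t' \<longleftrightarrow> m s \<le> card (S t')" if t': "t' \<in> {1..T}" and s: "s \<in> {1..T}" for s t'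
  proof
    assume "s \<in> S t'"
    then obtain k where k: "s = \<sigma> k" "k \<in> {1..card (S t')}" using Sord t' by blast
    have "k \<in> {1..T}" using k(2) cardS[OF t'] t' by auto
    then show "m s \<le> card (S t')" using k m\<sigma> by auto
  next
    assume "m s \<le> card (S t')"
    then have "m s \<in> {1..card (S t')}" using \<sigma>m(2)[OF s] by auto
    then have "\<sigma> (m s) \<in> S t'" using Sord t' by blast
    then show "s \<in> S t'" using \<sigma>m(1)[OF s] by simp
  qed
  have notSS: "s \<notin> S s" if "s \<in> {1..T}" for s using Ssub that by fastforce
  have finS: "finite (S t)" using ST[OF t] finite_subset by blast
  have finAB: "finite (AB s)" for s unfolding AB_def arrived_before_def by simp
  define D where "D = Sigma (S t) (\<lambda>s. AB s - S s)"
  define P where "P = Sigma {1..t} (unavail S)"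
  have finD: "finite D" unfolding D_def using finS finAB by auto
  have finU: "finite (unavail S s)" for s unfolding unavail_def by simp
  have finP: "finite P" unfolding P_def using finU by auto
  have Dprops: "s \<in> {1..T} \<and> q \<in> {1..T} \<and> m q < m s \<and> s \<in> S t \<and> q \<in> S t \<and> q \<notin> S s \<and> s < t \<and> q < t"
    if sq: "(s, q) \<in> D" for s q
  proof -
    have s: "s \<in> S t" "s \<in> {1..T}" using sq ST[OF t] unfolding D_def by auto
    have q: "q \<in> {1..T}" "m q < m s" "q \<notin> S s" using sq ABiff[OF s(2)] unfolding D_def by auto
    have "m s \<le> card (S t)" using Siff[OF t s(2)] s(1) by simp
    then have qS: "q \<in> S t" using Siff[OF t q(1)] q(2) by simp
    show ?thesis using s q qS Ssub t by fastforce
  qed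
  define \<phi> where "\<phi> = (\<lambda>(s::nat, q::nat). (max s q, min s q))"
  have \<phi>P: "\<phi> ` D \<subseteq> P"
  proof
    fix y assume "y \<in> \<phi> ` D"
    then obtain s q where sq: "(s, q) \<in> D" and y: "y = \<phi> (s, q)" by auto
    note pr = Dprops[OF sq]
    have "s \<noteq> q" using pr by auto
    show "y \<in> P"
    proof (cases "q < s")
      case True
      then show ?thesis using pr y unfolding \<phi>_def P_def unavail_def by auto
    next
      case False
      then have qs: "s < q" using \<open>s \<noteq> q\<close> by simp
      have "s \<notin> S q"
      proof
        assume "s \<in> S q"
        then have "m s \<le> card (S q)" using Siff[of q s] pr by simp
        then have "q \<in> S q" using Siff[of q q] pr by simp
        then show False using notSS[of q] pr by simp
      qed
      then show ?thesis using pr y qs unfolding \<phi>_def P_def unavail_def by auto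
    qed
  qed
  have injD: "inj_on \<phi> D"
  proof (rule inj_onI)
    fix x y assume x: "x \<in> D" and y: "y \<in> D" and e: "\<phi> x = \<phi> y"
    obtain s q where [simp]: "x = (s, q)" by fastforce
    obtain s' q' where [simp]: "y = (s', q')" by fastforce
    have px: "m q < m s" using Dprops x by simp
    have py: "m q' < m s'" using Dprops y by simp
    have "(s = s' \<and> q = q') \<or> (s = q' \<and> q = s')" using e unfolding \<phi>_def by (auto simp: max_def min_def split: if_splits)
    then show "x = y" using px py by auto
  qed
  define f where "f = (\<lambda>(s::nat, q::nat). a s * a q)"
  have f\<phi>: "f (\<phi> z) = f z" for z unfolding f_def \<phi>_def by (cases z) (auto simp: max_def min_def)
  have f0: "0 \<le> f z" for z unfolding f_def using a0 by (auto simp: case_prod_beta)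
  have fP: "f z \<le> G\<^sup>2" if "z \<in> P" for z
  proof -
    obtain s q where [simp]: "z = (s, q)" by fastforce
    have "s \<in> {1..T}" "q \<in> {1..T}" using that t unfolding P_def unavail_def by auto
    then show ?thesis unfolding f_def using a2G by simp
  qed
  have sumD: "sum f D = sum f (\<phi> ` D)" using sum.reindex[OF injD, of f] f\<phi> by (simp add: comp_def)
  have DP: "sum f D \<le> sum f P" unfolding sumD by (rule sum_mono2[OF finP \<phi>P f0])
  have cardD: "card (\<phi> ` D) = card D" using card_image[OF injD] .
  have cardDP: "card D \<le> card P" using card_mono[OF finP \<phi>P] cardD by simp
  have PD: "sum f P \<le> sum f D + G\<^sup>2 * (real (card P) - real (card D))"
  proof -
    have "sum f P = sum f (\<phi> ` D) + sum f (P - \<phi> ` D)"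
      using sum.subset_diff[OF \<phi>P finP] by (simp add: add.commute)
    also have "sum f (P - \<phi> ` D) \<le> real (card (P - \<phi> ` D)) * G\<^sup>2"
      using sum_bounded_above[of "P - \<phi> ` D" f "G\<^sup>2"] fP by auto
    also have "card (P - \<phi> ` D) = card P - card D"
      using card_Diff_subset[OF finite_subset[OF \<phi>P finP] \<phi>P] cardD by simp
    finally show ?thesis using sumD cardDP by (simp add: of_nat_diff mult.commute)
  qed
  have cardP: "card P = cum_unavail S t"
    unfolding P_def cum_unavail_def using finU by simp
  have pB: "pairs_B T \<sigma> S t = (\<lambda>(s, q). {s, q}) ` D"
  proof -
    have "s \<noteq> q" if "(s, q) \<in> D" for s q using Dprops[OF that] by auto
    then show ?thesis unfolding pairs_B_def D_def AB_def by fastforce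
  qed
  have injB: "inj_on (\<lambda>(s::nat, q::nat). {s, q}) D"
  proof (rule inj_onI)
    fix x y assume x: "x \<in> D" and y: "y \<in> D" and e: "(\<lambda>(s::nat, q::nat). {s, q}) x = (\<lambda>(s, q). {s, q}) y"
    obtain s q where [simp]: "x = (s, q)" by fastforce
    obtain s' q' where [simp]: "y = (s', q')" by fastforce
    have px: "m q < m s" using Dprops x by simp
    have py: "m q' < m s'" using Dprops y by simp
    have "(s = s' \<and> q = q') \<or> (s = q' \<and> q = s')" using e by (simp add: doubleton_eq_iff)
    then show "x = y" using px py by auto
  qed
  have cardB: "card (pairs_B T \<sigma> S t) = card D" unfolding pB using card_image[OF injB] .
  have lt: "lag_tilde T \<sigma> nrm g S t = (\<Sum>s\<in>S t. (a s)\<^sup>2) + 2 * sum f D"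
  proof -
    have "lag_tilde T \<sigma> nrm g S t = (\<Sum>s\<in>S t. (a s)\<^sup>2) + 2 * (\<Sum>s\<in>S t. \<Sum>q\<in>AB s - S s. a s * a q)"
      unfolding lag_tilde_def a_def AB_def
      by (simp add: sum.distrib sum_distrib_left mult.assoc)
    also have "(\<Sum>s\<in>S t. \<Sum>q\<in>AB s - S s. a s * a q) = sum f D"
      unfolding D_def f_def using finS finAB by (subst sum.Sigma) auto
    finally show ?thesis .
  qed
  have lg: "lag nrm g S t = (\<Sum>s=1..t. (a s)\<^sup>2) + 2 * sum f P"
  proof -
    have "lag nrm g S t = (\<Sum>s=1..t. (a s)\<^sup>2) + 2 * (\<Sum>s=1..t. \<Sum>q\<in>unavail S s. a s * a q)"
      unfolding lag_def a_def
      by (simp add: sum.distrib sum_distrib_left mult.assoc)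
    also have "(\<Sum>s=1..t. \<Sum>q\<in>unavail S s. a s * a q) = sum f P"
      unfolding P_def f_def using finU by (subst sum.Sigma) auto
    finally show ?thesis .
  qed
  have Ssub1: "S t \<subseteq> {1..t}" using Ssub t by fastforce
  have sq1: "(\<Sum>s\<in>S t. (a s)\<^sup>2) \<le> (\<Sum>s=1..t. (a s)\<^sup>2)"
    by (rule sum_mono2[OF _ Ssub1]) auto
  have sq2: "(\<Sum>s=1..t. (a s)\<^sup>2) \<le> (\<Sum>s\<in>S t. (a s)\<^sup>2) + G\<^sup>2 * (real t - real (card (S t)))"
  proof -
    have "(\<Sum>s=1..t. (a s)\<^sup>2) = (\<Sum>s\<in>S t. (a s)\<^sup>2) + (\<Sum>s\<in>{1..t} - S t. (a s)\<^sup>2)"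
      using sum.subset_diff[OF Ssub1] by (simp add: add.commute)
    also have "(\<Sum>s\<in>{1..t} - S t. (a s)\<^sup>2) \<le> real (card ({1..t} - S t)) * G\<^sup>2"
      using t by (intro sum_bounded_above) (auto intro!: power_mono aG a0)
    also have "card ({1..t} - S t) = t - card (S t)" using card_Diff_subset[OF finS Ssub1] by simp
    finally show ?thesis using card_mono[OF _ Ssub1] by (simp add: of_nat_diff mult.commute)
  qed
  have sq3: "(\<Sum>s\<in>S t. (a s)\<^sup>2) \<le> real (card (S t)) * G\<^sup>2"
    using ST[OF t] by (intro sum_bounded_above) (auto intro!: power_mono aG a0)
  have fD: "sum f D \<le> real (card D) * G\<^sup>2"
    using fP \<phi>P f\<phi> by (intro sum_bounded_above) (metis image_subset_iff)
  have cS: "real (card (S t)) + 1 \<le> real t" using cardS[OF t] t by auto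
  have sqn: "0 \<le> (\<Sum>s\<in>S t. (a s)\<^sup>2)" by (simp add: sum_nonneg)
  have fDn: "0 \<le> sum f D" using f0 by (simp add: sum_nonneg)
  have nu: "nu T \<sigma> S t = real t + 2 * real (card P) - real (card (S t)) - 2 * real (card D)"
    unfolding nu_def cardB cardP ..
  show "lag_tilde T \<sigma> nrm g S t \<le> lag nrm g S t" unfolding lt lg using sq1 DP by simp
  show "lag nrm g S t \<le> lag_tilde T \<sigma> nrm g S t + G\<^sup>2 * nu T \<sigma> S t"
    unfolding lt lg nu using sq2 PD by (simp add: algebra_simps)
  have "G\<^sup>2 * 1 \<le> G\<^sup>2 * nu T \<sigma> S t"
    unfolding nu using cS cardDP by (intro mult_left_mono) auto
  then show "G\<^sup>2 \<le> lag_tilde T \<sigma> nrm g S t + G\<^sup>2 * nu T \<sigma> S t" unfolding lt using sqn fDn by simp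
  show "lag_tilde T \<sigma> nrm g S t + G\<^sup>2 * nu T \<sigma> S t \<le> G\<^sup>2 * (real t + 2 * real (cum_unavail S t))"
    unfolding lt nu cardP[symmetric] using sq3 fD by (simp add: algebra_simps)
qed



lemma linear_regret:
  fixes nrm :: "'a::euclidean_space \<Rightarrow> real" and g x :: "nat \<Rightarrow> 'a"
  assumes N: "is_norm nrm" and cx: "convex X" and Hsc: "sc_on nrm X H"
    and H0: "\<forall>y\<in>X. 0 \<le> H y" and T: "1 \<le> T"
    and e: "\<forall>t\<in>{1..T}. 0 < e t" and emono: "\<forall>t. 1 \<le> t \<and> t < T \<longrightarrow> e (Suc t) \<le> e t"
    and Ssub: "\<forall>t\<in>{1..T}. S t \<subseteq> {1..<t}"
    and xX: "\<forall>t\<in>{1..T}. x t \<in> X"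
    and dda: "\<forall>t\<in>{1..T}. \<forall>y\<in>X. inner (\<Sum>s\<in>S t. g s) (x t) + H (x t) / e t
                                   \<le> inner (\<Sum>s\<in>S t. g s) y + H y / e t"
    and p: "p \<in> X"
  shows "(\<Sum>t=1..T. inner (g t) (x t - p)) \<le> H p / e T +
    (\<Sum>t=1..T. e t * ((dual_norm nrm (g t))\<^sup>2 / 2 + dual_norm nrm (g t) * (\<Sum>q\<in>unavail S t. dual_norm nrm (g q))))"
proof -
  define a where "a = (\<lambda>s. dual_norm nrm (g s))"
  define D where "D = (\<lambda>s. \<Sum>q\<in>unavail S s. a q)"
  define c where "c = (\<lambda>s. e s * ((a s)\<^sup>2 / 2 + a s * D s))"
  define P where "P = (\<lambda>s ee. \<forall>y\<in>X. (\<Sum>j\<in>{1..<s}. inner (g j) (x j) - c j) \<le> inner (\<Sum>j\<in>{1..<s}. g j) y + H y / ee)"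
  have a0: "\<And>s. 0 \<le> a s" unfolding a_def using dual_norm_props(1)[OF N] .
  have D0: "\<And>s. 0 \<le> D s" unfolding D_def using a0 by (simp add: sum_nonneg)
  have step: "P (Suc s) e'" if s: "s \<in> {1..T}" and e': "0 < e'" "e' \<le> e s" and IH: "P s (e s)" for s e'
    unfolding P_def
  proof
    fix y assume y: "y \<in> X"
    have es: "0 < e s" using e s by blast
    have Sd: "S s \<union> unavail S s = {1..<s}" "S s \<inter> unavail S s = {}"
      using Ssub s unfolding unavail_def by auto
    have cd: "(\<Sum>j\<in>S s. g j) + (\<Sum>j\<in>unavail S s. g j) = (\<Sum>j\<in>{1..<s}. g j)"
      using sum.union_disjoint[of "S s" "unavail S s" g] Sd finite_subset[OF Ssub[rule_format, OF s]] by (simp add: unavail_def)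
    have \<delta>b: "\<forall>v. inner (\<Sum>j\<in>unavail S s. g j) v \<le> D s * nrm v"
    proof
      fix v
      have "inner (\<Sum>j\<in>unavail S s. g j) v = (\<Sum>j\<in>unavail S s. inner (g j) v)" by (simp add: inner_sum_left)
      also have "\<dots> \<le> (\<Sum>j\<in>unavail S s. a j * nrm v)" unfolding a_def
        by (intro sum_mono dual_norm_props(2)[OF N])
      finally show "inner (\<Sum>j\<in>unavail S s. g j) v \<le> D s * nrm v" unfolding D_def by (simp add: sum_distrib_right)
    qed
    have gb: "\<forall>v. inner (g s) v \<le> a s * nrm v" unfolding a_def using dual_norm_props(2)[OF N] by blast
    obtain w where w: "w \<in> X" and wle: "inner (\<Sum>j\<in>{1..<s}. g j) w + H w / e s
        \<le> inner (\<Sum>j\<in>{1..<s}. g j) y + H y / e s + inner (g s) (y - x s) + c s"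
      using segment_step[OF N cx xX[rule_format, OF s] y es Hsc dda[THEN bspec, OF s] D0 a0 \<delta>b gb]
      unfolding cd c_def by blast
    have IHw: "(\<Sum>j\<in>{1..<s}. inner (g j) (x j) - c j) \<le> inner (\<Sum>j\<in>{1..<s}. g j) w + H w / e s"
      using IH w unfolding P_def by blast
    have Hy: "H y / e s \<le> H y / e'" using H0 y e' by (simp add: divide_left_mono)
    have s1: "{1..<Suc s} = insert s {1..<s}" using s by auto
    show "(\<Sum>j\<in>{1..<Suc s}. inner (g j) (x j) - c j) \<le> inner (\<Sum>j\<in>{1..<Suc s}. g j) y + H y / e'"
      unfolding s1 using IHw wle Hy by (simp add: inner_add_left inner_diff_right)
  qed
  have all: "Suc s \<le> T \<longrightarrow> P (Suc s) (e (Suc s))" for s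
  proof (induction s)
    case 0
    show ?case unfolding P_def using H0 e T by (auto intro!: divide_nonneg_pos)
  next
    case (Suc n)
    show ?case
    proof
      assume n: "Suc (Suc n) \<le> T"
      show "P (Suc (Suc n)) (e (Suc (Suc n)))"
        using step[of "Suc n" "e (Suc (Suc n))"] Suc.IH n e emono by auto
    qed
  qed
  have PT: "P T (e T)" using all[of "T - 1"] T by simp
  have "P (Suc T) (e T)" using step[OF _ _ _ PT] T e by auto
  then have fin: "(\<Sum>j\<in>{1..T}. inner (g j) (x j) - c j) \<le> inner (\<Sum>j\<in>{1..T}. g j) p + H p / e T"
    using p unfolding P_def by (simp add: atLeastLessThanSuc_atLeastAtMost)
  have "(\<Sum>t=1..T. inner (g t) (x t - p)) = (\<Sum>j\<in>{1..T}. inner (g j) (x j)) - inner (\<Sum>j\<in>{1..T}. g j) p"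
    by (simp add: inner_diff_right inner_sum_left sum_subtractf)
  also have "\<dots> \<le> H p / e T + (\<Sum>t=1..T. c t)" using fin by (simp add: sum_subtractf)
  finally show ?thesis unfolding c_def D_def a_def .
qed



theorem proposition3:
  fixes nrm :: "'a::euclidean_space \<Rightarrow> real"
    and X :: "'a set"
    and h :: "'a \<Rightarrow> ereal"
    and T :: nat
    and agent :: "nat \<Rightarrow> 'ag"
    and Sa :: "'ag \<Rightarrow> nat \<Rightarrow> nat set"
    and S :: "nat \<Rightarrow> nat set"
    and f :: "nat \<Rightarrow> 'a \<Rightarrow> ereal"
    and x g :: "nat \<Rightarrow> 'a"
    and \<sigma> :: "nat \<Rightarrow> nat"
    and \<eta> :: "nat \<Rightarrow> ereal"
    and G r :: real
    and p :: 'a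
  assumes norm: "is_norm nrm"
    and X_closed: "closed X" and X_convex: "convex X"
    and h_lsc: "lower_semicont h"
    and h_sc: "strongly_convex_on nrm X h"
    and h_dom: "\<forall>y\<in>X. h y \<noteq> \<infinity>"
    and h_sel: "has_continuous_subgrad_selection h"
    and h_nonneg: "\<forall>y. 0 \<le> h y"
    and T_pos: "1 \<le> T"
    and Sa_sub: "\<forall>a t. Sa a t \<subseteq> {1..<t}"
    and Sa_mono: "\<forall>a t t'. t \<le> t' \<longrightarrow> Sa a t \<subseteq> Sa a t'"
    and S_def: "\<forall>t\<in>{1..T}. S t = Sa (agent t) t"
    and S_incr: "\<forall>t. 1 \<le> t \<and> t < T \<longrightarrow> S t \<subseteq> S (Suc t)"
    and \<sigma>_perm: "bij_betw \<sigma> {1..T} {1..T}"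
    and \<sigma>_order: "\<forall>t\<in>{1..T}. S t = \<sigma> ` {1..card (S t)}"
    and f_conv: "\<forall>t\<in>{1..T}. proper_convex (f t)"
    and f_dom: "\<forall>t\<in>{1..T}. \<forall>y\<in>X. subdiff (f t) y \<noteq> {}"
    and g_sub: "\<forall>t\<in>{1..T}. g t \<in> subdiff (f t) (x t)"
    and g_bound: "\<forall>t\<in>{1..T}. dual_norm nrm (g t) \<le> G"
    and r_pos: "0 < r"
    and \<eta>_0: "\<eta> 0 = \<infinity>"
    and \<eta>_rec: "\<forall>t\<in>{1..T}. \<eta> t = min (\<eta> (t - 1))
        (let q = lag_tilde T \<sigma> nrm g S t + G\<^sup>2 * nu T \<sigma> S t
         in if q = 0 then \<infinity> else ereal (r / sqrt q))"
    and dda: "\<forall>t\<in>{1..T}. x t \<in> X \<and>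
        (\<forall>y\<in>X. ereal (\<Sum>s\<in>S t. g s \<bullet> x t) + h (x t) / \<eta> t
                 \<le> ereal (\<Sum>s\<in>S t. g s \<bullet> y) + h y / \<eta> t)"
    and p_X: "p \<in> X"
    and p_h: "h p \<le> ereal (r\<^sup>2)"
  shows "(\<Sum>t=1..T. real_of_ereal (f t (x t)) - real_of_ereal (f t p))
           \<le> 2 * r * (MAX t\<in>{1..T}. sqrt (lag_tilde T \<sigma> nrm g S t + G\<^sup>2 * nu T \<sigma> S t))
       \<and> 2 * r * (MAX t\<in>{1..T}. sqrt (lag_tilde T \<sigma> nrm g S t + G\<^sup>2 * nu T \<sigma> S t))
           \<le> 2 * r * min (MAX t\<in>{1..T}. sqrt (lag nrm g S t + G\<^sup>2 * nu T \<sigma> S t))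
                         (G * sqrt (real T + 2 * real (cum_unavail S T)))"
proof -
  define a where "a = (\<lambda>s. dual_norm nrm (g s))"
  define q where "q = (\<lambda>t. lag_tilde T \<sigma> nrm g S t + G\<^sup>2 * nu T \<sigma> S t)"
  define M where "M = (MAX t\<in>{1..T}. sqrt (q t))"
  have Ssub: "\<forall>t\<in>{1..T}. S t \<subseteq> {1..<t}" using S_def Sa_sub by auto
  note cb = comb[OF norm \<sigma>_perm Ssub \<sigma>_order g_bound]
  have a0: "\<And>s. 0 \<le> a s" unfolding a_def using dual_norm_props(1)[OF norm] .
  have T1: "1 \<in> {1..T}" using T_pos by simp
  have G0: "0 \<le> G" using order_trans[OF a0[of 1, unfolded a_def] g_bound[rule_format, OF T1]] .
  have qG: "G\<^sup>2 \<le> q t" if "t \<in> {1..T}" for t using cb(3)[OF that] unfolding q_def .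
  have fin: "finite {1..T}" and ne: "{1..T::nat} \<noteq> {}" using T_pos by auto
  have Mge: "sqrt (q t) \<le> M" if "t \<in> {1..T}" for t
    unfolding M_def using that fin by (intro Max_ge) auto
  obtain t0 where t0: "t0 \<in> {1..T}" and Mt0: "M = sqrt (q t0)"
  proof -
    have "M \<in> (\<lambda>t. sqrt (q t)) ` {1..T}" unfolding M_def using fin ne by (intro Max_in) auto
    then show ?thesis using that by blast
  qed
  have M0: "0 \<le> M" using Mge[OF T1] qG[OF T1] by (smt (verit) real_sqrt_ge_zero zero_le_power2)
  have part2: "M \<le> min (MAX t\<in>{1..T}. sqrt (lag nrm g S t + G\<^sup>2 * nu T \<sigma> S t))
                         (G * sqrt (real T + 2 * real (cum_unavail S T)))"
  proof (rule min.boundedI)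
    have "M \<le> sqrt (lag nrm g S t0 + G\<^sup>2 * nu T \<sigma> S t0)"
      unfolding Mt0 q_def using cb(1)[OF t0] by simp
    also have "\<dots> \<le> (MAX t\<in>{1..T}. sqrt (lag nrm g S t + G\<^sup>2 * nu T \<sigma> S t))"
      using t0 fin by (intro Max_ge) auto
    finally show "M \<le> (MAX t\<in>{1..T}. sqrt (lag nrm g S t + G\<^sup>2 * nu T \<sigma> S t))" .
  next
    have cu: "cum_unavail S t0 \<le> cum_unavail S T"
      unfolding cum_unavail_def using t0 by (intro sum_mono2) auto
    have "q t0 \<le> G\<^sup>2 * (real t0 + 2 * real (cum_unavail S t0))" using cb(4)[OF t0] unfolding q_def .
    also have "\<dots> \<le> G\<^sup>2 * (real T + 2 * real (cum_unavail S T))"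
      using t0 cu by (intro mult_left_mono) auto
    finally have "M \<le> sqrt (G\<^sup>2 * (real T + 2 * real (cum_unavail S T)))" unfolding Mt0 by simp
    also have "\<dots> = G * sqrt (real T + 2 * real (cum_unavail S T))"
      using G0 by (simp add: real_sqrt_mult)
    finally show "M \<le> G * sqrt (real T + 2 * real (cum_unavail S T))" .
  qed
  have lin: "real_of_ereal (f t (x t)) - real_of_ereal (f t p) \<le> inner (g t) (x t - p)"
    if t: "t \<in> {1..T}" for t
  proof -
    have gs: "f t (x t) \<noteq> \<infinity>" "f t (x t) + ereal (inner (g t) (p - x t)) \<le> f t p"
      using g_sub t unfolding subdiff_def by auto
    have pc: "\<forall>y. f t y \<noteq> - \<infinity>" using f_conv t unfolding proper_convex_def by blast
    have "subdiff (f t) p \<noteq> {}" using f_dom t p_X by blast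
    then have fp: "f t p \<noteq> \<infinity>" unfolding subdiff_def by blast
    obtain A where A: "f t (x t) = ereal A" using gs(1) pc by (cases "f t (x t)") auto
    obtain B where B: "f t p = ereal B" using fp pc by (cases "f t p") auto
    have "A + inner (g t) (p - x t) \<le> B" using gs(2) unfolding A B by simp
    then show ?thesis unfolding A B by (simp add: inner_diff_right)
  qed
  have reg: "(\<Sum>t=1..T. real_of_ereal (f t (x t)) - real_of_ereal (f t p)) \<le> (\<Sum>t=1..T. inner (g t) (x t - p))"
    using lin by (intro sum_mono) auto
  have part1: "(\<Sum>t=1..T. inner (g t) (x t - p)) \<le> 2 * r * M"
  proof (cases "G = 0")
    case True
    have "inner (g t) (x t - p) \<le> 0" if "t \<in> {1..T}" for t
    proof -
      have "a t = 0" using g_bound that a0[of t] True unfolding a_def by force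
      then show ?thesis using dual_norm_props(2)[OF norm, of "g t" "x t - p"] unfolding a_def by simp
    qed
    then have "(\<Sum>t=1..T. inner (g t) (x t - p)) \<le> 0" by (intro sum_nonpos) auto
    moreover have "0 \<le> 2 * r * M" using M0 r_pos by simp
    ultimately show ?thesis by linarith
  next
    case False
    then have Gp: "G > 0" using G0 by simp
    have qpos: "q t > 0" if "t \<in> {1..T}" for t using qG[OF that] Gp by (smt (verit) zero_less_power)
    have Mp: "M > 0" using Mge[OF T1] qpos[OF T1] by (smt (verit) real_sqrt_gt_zero)
    have hrec: "\<eta> t = min (\<eta> (t - 1)) (ereal (r / sqrt (q t)))" if "t \<in> {1..T}" for t
      using \<eta>_rec that qpos[OF that] unfolding q_def Let_def by auto
    define e where "e = (\<lambda>t. real_of_ereal (\<eta> t))"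
    have rMq: "r / M \<le> r / sqrt (q t)" if "t \<in> {1..T}" for t
      using Mge[OF that] qpos[OF that] r_pos Mp by (intro divide_left_mono) auto
    have efin: "1 \<le> t \<longrightarrow> t \<le> T \<longrightarrow> \<eta> t = ereal (e t) \<and> r / M \<le> e t" for t
    proof (induction t)
      case 0 then show ?case by simp
    next
      case (Suc n)
      show ?case
      proof (intro impI)
        assume n: "1 \<le> Suc n" "Suc n \<le> T"
        then have st: "Suc n \<in> {1..T}" by simp
        show "\<eta> (Suc n) = ereal (e (Suc n)) \<and> r / M \<le> e (Suc n)"
        proof (cases "n = 0")
          case True
          then show ?thesis using hrec[OF st] \<eta>_0 rMq[OF st] unfolding e_def by simp
        next
          case False
          then have "\<eta> n = ereal (e n)" "r / M \<le> e n" using Suc.IH n by auto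
          then show ?thesis using hrec[OF st] rMq[OF st] unfolding e_def by (simp add: min_def)
        qed
      qed
    qed
    have eT: "\<eta> t = ereal (e t)" "r / M \<le> e t" if "t \<in> {1..T}" for t using efin[of t] that by auto
    have epos: "\<forall>t\<in>{1..T}. 0 < e t" using eT(2) r_pos Mp by (smt (verit) divide_pos_pos)
    have eq: "e t \<le> r / sqrt (q t)" if "t \<in> {1..T}" for t
    proof -
      have "\<eta> t \<le> ereal (r / sqrt (q t))" using hrec[OF that] by simp
      then show ?thesis using eT(1)[OF that] by simp
    qed
    have emono: "\<forall>t. 1 \<le> t \<and> t < T \<longrightarrow> e (Suc t) \<le> e t"
    proof (intro allI impI)
      fix t assume t: "1 \<le> t \<and> t < T"
      then have "\<eta> (Suc t) \<le> \<eta> t" using hrec[of "Suc t"] by simp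
      then show "e (Suc t) \<le> e t" using eT[of t] eT[of "Suc t"] t by simp
    qed
    define H where "H = (\<lambda>y. real_of_ereal (h y))"
    have hH: "h y = ereal (H y)" if "y \<in> X" for y
      using h_dom h_nonneg that unfolding H_def by (cases "h y") auto
    have H0: "\<forall>y\<in>X. 0 \<le> H y" using h_nonneg hH by (metis ereal_less_eq(5))
    have Hsc: "sc_on nrm X H" unfolding sc_on_def
    proof (intro ballI allI impI)
      fix y z and u :: real assume y: "y \<in> X" and z: "z \<in> X" and u: "0 \<le> u \<and> u \<le> 1"
      have w: "u *\<^sub>R y + (1 - u) *\<^sub>R z \<in> X" using X_convex y z u by (simp add: convex_def)
      show "H (u *\<^sub>R y + (1 - u) *\<^sub>R z) \<le> u * H y + (1 - u) * H z - u * (1 - u) / 2 * (nrm (y - z))\<^sup>2"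
      proof -
        have "h (u *\<^sub>R y + (1 - u) *\<^sub>R z) \<le> ereal u * h y + ereal (1 - u) * h z - ereal (u * (1 - u) / 2 * (nrm (y - z))\<^sup>2)"
          using h_sc y z u unfolding strongly_convex_on_def by blast
        then show ?thesis unfolding hH[OF y] hH[OF z] hH[OF w] by simp
      qed
    qed
    have xX: "\<forall>t\<in>{1..T}. x t \<in> X" using dda by blast
    have ddaR: "\<forall>t\<in>{1..T}. \<forall>y\<in>X. inner (\<Sum>s\<in>S t. g s) (x t) + H (x t) / e t
                                   \<le> inner (\<Sum>s\<in>S t. g s) y + H y / e t"
    proof (intro ballI)
      fix t y assume t: "t \<in> {1..T}" and y: "y \<in> X"
      have "ereal (\<Sum>s\<in>S t. g s \<bullet> x t) + h (x t) / \<eta> t \<le> ereal (\<Sum>s\<in>S t. g s \<bullet> y) + h y / \<eta> t"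
        using dda t y by blast
      then have "(\<Sum>s\<in>S t. g s \<bullet> x t) + H (x t) / e t \<le> (\<Sum>s\<in>S t. g s \<bullet> y) + H y / e t"
        unfolding hH[OF y] hH[OF xX[rule_format, OF t]] eT(1)[OF t]
        using epos[rule_format, OF t] by (simp add: divide_ereal_def divide_inverse)
      then show "inner (\<Sum>s\<in>S t. g s) (x t) + H (x t) / e t \<le> inner (\<Sum>s\<in>S t. g s) y + H y / e t"
        by (simp add: inner_sum_left)
    qed
    note LR = linear_regret[OF norm X_convex Hsc H0 T_pos epos emono Ssub xX ddaR p_X]
    define l where "l = (\<lambda>t. (a t)\<^sup>2 + 2 * a t * (\<Sum>q\<in>unavail S t. a q))"
    have l0: "\<And>j. 0 \<le> l j" unfolding l_def using a0 by (simp add: sum_nonneg)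
    have lag_l: "lag nrm g S t = (\<Sum>i=1..t. l i)" for t unfolding lag_def l_def a_def ..
    have b1: "H p / e T \<le> r * M"
    proof -
      have Hp: "H p \<le> r\<^sup>2" using p_h hH[OF p_X] by simp
      have eTp: "0 < r / M" "r / M \<le> e T" using eT(2)[of T] T_pos r_pos Mp by auto
      have "H p / e T \<le> r\<^sup>2 / e T" proof (rule divide_right_mono[OF Hp])
        show "0 \<le> e T" using eTp by linarith
      qed
      also have "\<dots> \<le> r\<^sup>2 / (r / M)"
      proof (rule divide_left_mono)
        show "0 < e T * (r / M)" using eTp by (smt (verit) mult_pos_pos)
      qed (use eTp in auto)
      also have "\<dots> = r * M" using r_pos by (simp add: power2_eq_square)
      finally show ?thesis .
    qed
    have pt: "e t * l t \<le> r * (l t / sqrt (lag nrm g S t))" if t: "t \<in> {1..T}" for t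
    proof (cases "lag nrm g S t = 0")
      case True
      have "l t \<le> lag nrm g S t" unfolding lag_l using t l0 by (intro member_le_sum) auto
      then have "l t = 0" using True l0[of t] by simp
      then show ?thesis by simp
    next
      case False
      then have lp: "lag nrm g S t > 0" unfolding lag_l using l0 by (smt (verit) sum_nonneg)
      have "e t \<le> r / sqrt (q t)" using eq[OF t] .
      also have "\<dots> \<le> r / sqrt (lag nrm g S t)"
        using cb(2)[OF t] lp r_pos unfolding q_def by (intro divide_left_mono) auto
      finally have "e t * l t \<le> r / sqrt (lag nrm g S t) * l t" using l0 by (intro mult_right_mono) auto
      then show ?thesis by simp
    qed
    have b2: "(\<Sum>t=1..T. e t * ((a t)\<^sup>2 / 2 + a t * (\<Sum>q\<in>unavail S t. a q))) \<le> r * M"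
    proof -
      have "(\<Sum>t=1..T. e t * ((a t)\<^sup>2 / 2 + a t * (\<Sum>q\<in>unavail S t. a q))) = (\<Sum>t=1..T. e t * l t) / 2"
        unfolding l_def sum_divide_distrib by (intro sum.cong) (auto simp: field_simps)
      also have "(\<Sum>t=1..T. e t * l t) \<le> (\<Sum>t=1..T. r * (l t / sqrt (lag nrm g S t)))"
        using pt by (intro sum_mono) auto
      also have "\<dots> = r * (\<Sum>t=1..T. l t / sqrt (\<Sum>i=1..t. l i))" unfolding lag_l by (simp add: sum_distrib_left)
      also have "\<dots> \<le> r * (2 * sqrt (\<Sum>i=1..T. l i))" using sqrt_tele[OF l0] r_pos by (intro mult_left_mono) auto
      also have "sqrt (\<Sum>i=1..T. l i) \<le> M"
        using Mge[of T] cb(2)[of T] T_pos unfolding lag_l[symmetric] q_def by (smt (verit) atLeastAtMost_iff order_refl real_sqrt_le_mono)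
      finally show ?thesis using r_pos by (simp add: mult_left_mono divide_right_mono)
    qed
    show ?thesis using LR b1 b2 unfolding a_def by simp
  qed
  have Meq: "(MAX t\<in>{1..T}. sqrt (lag_tilde T \<sigma> nrm g S t + G\<^sup>2 * nu T \<sigma> S t)) = M"
    unfolding M_def q_def ..
  show ?thesis unfolding Meq
  proof
    show "(\<Sum>t = 1..T. real_of_ereal (f t (x t)) - real_of_ereal (f t p)) \<le> 2 * r * M"
      using reg part1 by linarith
    show "2 * r * M \<le> 2 * r * min (MAX t\<in>{1..T}. sqrt (lag nrm g S t + G\<^sup>2 * nu T \<sigma> S t))
                         (G * sqrt (real T + 2 * real (cum_unavail S T)))"
      using part2 r_pos by (intro mult_left_mono) auto
  qed
qed


end
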